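(* Let $F(s)=-\sum_{j=1}^\infty j\ln(1-e^{sj})$ for $s<0$. Then for every integer $m\ge0$, $$F^{(m)}(-s)\sim\zeta(3)\,\Gamma(m+2)\,\frac{1}{s^{m+2}},\quad\text{as } s\downarrow0.$$
   Context: $F$ is the fulcrum $s\mapsto\ln M(e^s)$ of the MacMahon function $M(z)=\prod_{j\ge1}(1-z^j)^{-j}$, the generating function of plane partitions. $F^{(m)}$ is the $m$-th derivative. $\alpha(s)\sim\beta(s)$ means $\alpha(s)/\beta(s)\to1$. $\zeta$ is the Riemann zeta function and $\Gamma$ the Gamma function. *)

theory Defs
  imports "HOL-Analysis.Analysis" "HOL-Library.Landau_Symbols"
begin

definition zeta3 :: real where
  "zeta3 = (\<Sum>n. 1 / (real (Suc n)) ^ 3)"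

definition macmahon_fulcrum :: "real \<Rightarrow> real" where
  "macmahon_fulcrum s = - (\<Sum>j. real (Suc j) * ln (1 - exp (s * real (Suc j))))"

end

theory Submission
  imports Defs "HOL-Real_Asymp.Real_Asymp"
begin


lemma negbin:
  fixes x :: real
  assumes "0 \<le> x" "x < 1"
  shows "(\<lambda>i. pochhammer (real p + 1) i / fact i * x^i) sums (1/(1-x)^(p+1))"
proof -
  have "\<bar>-x\<bar> < 1" using assms by simp
  from gen_binomial_real[OF this, of "-(real p+1)"]
  have "(\<lambda>n. ((-(real p+1)) gchoose n) * (-x)^n) sums (1 + -x) powr (-(real p+1))" .
  also have "(\<lambda>n. ((-(real p+1)) gchoose n) * (-x)^n) = (\<lambda>i. pochhammer (real p + 1) i / fact i * x^i)"
  proof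
    fix n
    have g: "((-(real p+1)) gchoose n) = (-1)^n * pochhammer (real p + 1) n / fact n"
      by (simp add: gbinomial_pochhammer add.commute)
    have m: "(-1)^n * (-x)^n = (x::real)^n"
      by (simp add: power_mult_distrib[symmetric])
    have "((-(real p+1)) gchoose n) * (-x)^n = ((-1)^n * (-x)^n) * pochhammer (real p + 1) n / fact n"
      by (simp only: g) (simp add: field_simps)
    then show "((-(real p+1)) gchoose n) * (-x)^n = pochhammer (real p + 1) n / fact n * x^n"
      by (simp only: m) simp
  qed
  also have "(1 + -x) powr (-(real p+1)) = inverse ((1-x) powr real (p+1))"
    using powr_minus[of "1-x" "real (p+1)"] by (simp add: algebra_simps)
  also have "(1-x) powr real (p+1) = (1-x)^(p+1)"
    by (rule powr_realpow) (use assms in simp)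
  also have "inverse ((1-x)^(p+1)) = 1/(1-x)^(p+1)" by (simp add: divide_inverse)
  finally show ?thesis .
qed

lemma coef:
  "fact p * (pochhammer (real p + 1) i / fact i) = pochhammer (real i + 1) p"
proof -
  have "pochhammer (1::real) (p+i) = pochhammer 1 p * pochhammer (1 + real p) i"
    using pochhammer_product'[of "1::real" p i] by simp
  moreover have "pochhammer (1::real) (i+p) = pochhammer 1 i * pochhammer (1 + real i) p"
    using pochhammer_product'[of "1::real" i p] by simp
  ultimately have "fact p * pochhammer (real p + 1) i = fact i * pochhammer (real i + 1) p"
    by (simp add: pochhammer_fact add.commute)
  then show ?thesis by (simp add: field_simps)
qed

lemma poch_nonneg:
  fixes a :: real assumes "a \<ge> 0" shows "0 \<le> pochhammer a p"
  using assms by (induction p) (auto simp: pochhammer_Suc)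

lemma poch_lo:
  fixes a :: real assumes "a \<ge> 0" shows "a^p \<le> pochhammer a p"
proof (induction p)
  case (Suc p)
  have "a^Suc p = a^p * a" by simp
  also have "\<dots> \<le> pochhammer a p * (a + real p)"
    using Suc assms by (intro mult_mono) (auto simp: poch_nonneg)
  finally show ?case by (simp add: pochhammer_Suc)
qed simp

lemma poch_hi:
  fixes a :: real assumes "a \<ge> 0" shows "pochhammer a p \<le> (a + real p)^p"
proof (induction p)
  case (Suc p)
  have "pochhammer a (Suc p) = pochhammer a p * (a + real p)" by (simp add: pochhammer_Suc)
  also have "\<dots> \<le> (a + real (Suc p))^p * (a + real (Suc p))"
  proof (intro mult_mono)
    show "pochhammer a p \<le> (a + real (Suc p))^p"
    proof -
      have "(a + real p)^p \<le> (a + real (Suc p))^p"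
        by (rule power_mono) (use assms in auto)
      then show ?thesis using Suc by linarith
    qed
  qed (use assms in \<open>auto simp: poch_nonneg\<close>)
  finally show ?case by (simp add: mult.commute)
qed simp

definition gp :: "nat \<Rightarrow> real \<Rightarrow> real" where
  "gp q v = (\<Sum>n. real (Suc n)^q * exp v ^ Suc n)"

lemma gp_bounds:
  assumes "v < 0"
  shows "summable (\<lambda>n. real (Suc n)^q * exp v ^ Suc n)"
    and "gp q v \<le> fact q * exp v / (1 - exp v)^(q+1)"
    and "fact q * exp v^(q+1) / (1 - exp v)^(q+1) \<le> gp q v"
proof -
  define x where "x = exp v"
  have x0: "0 < x" and x1: "x < 1" using assms by (auto simp: x_def)
  define c where "c i = pochhammer (real q + 1) i / fact i" for i
  have S: "(\<lambda>i. c i * x^i) sums (1/(1-x)^(q+1))"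
    unfolding c_def using negbin[of x q] x0 x1 by simp
  have cq: "fact q * c i = pochhammer (real i + 1) q" for i
    unfolding c_def by (rule coef)
  define f where "f n = real (Suc n)^q * x ^ Suc n" for n
  have f0: "f n \<ge> 0" for n unfolding f_def using x0 by simp
  have S2: "(\<lambda>i. fact q * x * (c i * x^i)) sums (fact q * x * (1/(1-x)^(q+1)))"
    by (rule sums_mult[OF S])
  have le1: "f n \<le> fact q * x * (c n * x^n)" for n
  proof -
    have "real (Suc n)^q \<le> pochhammer (real n + 1) q"
      using poch_lo[of "real n + 1" q] by (simp add: add.commute)
    also have "\<dots> = fact q * c n" by (simp add: cq)
    finally have "real (Suc n)^q * x^Suc n \<le> fact q * c n * x^Suc n"
      using x0 by (intro mult_right_mono) auto
    then show ?thesis by (simp add: f_def mult_ac)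
  qed
  have sf: "summable f"
    by (rule summable_comparison_test[OF _ sums_summable[OF S2]]) (use le1 f0 in auto)
  then show "summable (\<lambda>n. real (Suc n)^q * exp v ^ Suc n)" unfolding f_def x_def .
  have gpf: "gp q v = suminf f" unfolding gp_def f_def x_def ..
  have "suminf f \<le> fact q * x * (1/(1-x)^(q+1))"
    using suminf_le[OF le1 sf sums_summable[OF S2]] sums_unique[OF S2] by simp
  then show "gp q v \<le> fact q * exp v / (1 - exp v)^(q+1)"
    by (simp add: gpf x_def)
  have S3: "(\<lambda>i. fact q * x^(q+1) * (c i * x^i)) sums (fact q * x^(q+1) * (1/(1-x)^(q+1)))"
    by (rule sums_mult[OF S])
  have le2: "fact q * x^(q+1) * (c i * x^i) \<le> f (i + q)" for i
  proof -
    have "fact q * c i = pochhammer (real i + 1) q" by (simp add: cq)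
    also have "\<dots> \<le> (real i + 1 + real q)^q"
      by (rule poch_hi) simp
    also have "\<dots> = real (Suc (i+q))^q" by (simp add: add_ac)
    finally have "fact q * c i * x^(Suc (i+q)) \<le> real (Suc (i+q))^q * x^(Suc (i+q))"
      using x0 by (intro mult_right_mono) auto
    moreover have "fact q * x^(q+1) * (c i * x^i) = fact q * c i * x^(Suc (i+q))"
      by (simp add: power_add mult_ac)
    ultimately show ?thesis by (simp only: f_def)
  qed
  have sfq: "summable (\<lambda>i. f (i + q))" using sf by (rule summable_ignore_initial_segment)
  have "fact q * x^(q+1) * (1/(1-x)^(q+1)) \<le> (\<Sum>i. f (i + q))"
    using suminf_le[OF le2 sums_summable[OF S3] sfq] sums_unique[OF S3] by simp
  also have "\<dots> \<le> suminf f"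
    using suminf_split_initial_segment[OF sf, of q] f0 by (simp add: sum_nonneg)
  finally show "fact q * exp v^(q+1) / (1 - exp v)^(q+1) \<le> gp q v"
    by (simp add: gpf x_def)
qed

lemma gp_nonneg: "v < 0 \<Longrightarrow> 0 \<le> gp q v"
  unfolding gp_def by (intro suminf_nonneg gp_bounds(1)) auto

lemma gp_mono:
  assumes "v \<le> w" "w < 0" shows "gp q v \<le> gp q w"
  unfolding gp_def
proof (rule suminf_le)
  show "summable (\<lambda>n. real (Suc n)^q * exp v ^ Suc n)" using assms by (intro gp_bounds(1)) auto
  show "summable (\<lambda>n. real (Suc n)^q * exp w ^ Suc n)" using assms by (intro gp_bounds(1)) auto
  show "real (Suc n)^q * exp v ^ Suc n \<le> real (Suc n)^q * exp w ^ Suc n" for n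
    using assms by (intro mult_left_mono power_mono) auto
qed

lemma gp_le_geom:
  assumes "v \<le> b" "b < 0" "k \<ge> 1"
  shows "gp q (v * real k) \<le> fact q / (1 - exp b)^(q+1) * exp b ^ k"
proof -
  have vk: "v * real k \<le> b * real k" using assms by (intro mult_right_mono) auto
  have bk: "b * real k \<le> b" using assms
    by (metis mult.right_neutral mult_left_mono_neg of_nat_1 of_nat_le_iff less_imp_le)
  have vk0: "v * real k < 0" using vk bk assms by linarith
  define y where "y = exp (v * real k)"
  have y0: "0 < y" by (simp add: y_def)
  have yb: "y \<le> exp b ^ k"
    using vk by (simp add: y_def exp_of_nat_mult[symmetric] mult.commute)
  have yb1: "y \<le> exp b" using vk bk by (simp add: y_def)
  have eb: "exp b < 1" using assms by simp
  have "gp q (v * real k) \<le> fact q * y / (1 - y)^(q+1)"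
    using gp_bounds(2)[OF vk0] by (simp add: y_def)
  also have "\<dots> \<le> fact q * exp b ^ k / (1 - exp b)^(q+1)"
    using y0 yb yb1 eb
    by (intro frac_le mult_left_mono power_mono) auto
  finally show ?thesis by simp
qed

lemma gp_deriv:
  assumes "v < 0"
  shows "(gp q has_field_derivative gp (Suc q) v) (at v)"
proof -
  define SS where "SS = atLeastAtMost (v * 2) (v / 2)"
  define f where "f n w = real (Suc n)^q * exp w ^ Suc n" for n w
  define f' where "f' n w = real (Suc n)^Suc q * exp w ^ Suc n" for n w
  have c1: "convex SS" by (simp add: SS_def)
  have c2: "(f n has_field_derivative f' n x) (at x within SS)" if "x \<in> SS" for n x
  proof -
    have "((\<lambda>x. exp x ^ Suc n) has_field_derivative (1 + of_nat n) * (exp x * exp x ^ n)) (at x within SS)"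
      by (rule DERIV_power_Suc) (rule has_field_derivative_at_within[OF DERIV_exp])
    then have "(f n has_field_derivative real (Suc n)^q * ((1 + of_nat n) * (exp x * exp x ^ n))) (at x within SS)"
      unfolding f_def by (rule DERIV_cmult)
    then show ?thesis by (rule DERIV_cong) (simp add: f'_def)
  qed
  have c3: "uniformly_convergent_on SS (\<lambda>n x. \<Sum>i<n. f' i x)"
  proof (rule Weierstrass_m_test')
    show "norm (f' n x) \<le> f' n (v/2)" if "x \<in> SS" for n x
    proof -
      have "exp x ^ Suc n \<le> exp (v/2) ^ Suc n"
        by (rule power_mono) (use that in \<open>auto simp: SS_def\<close>)
      then have "real (Suc n)^Suc q * exp x ^ Suc n \<le> real (Suc n)^Suc q * exp (v/2) ^ Suc n"
        by (rule mult_left_mono) simp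
      then show ?thesis by (simp add: f'_def abs_mult)
    qed
    show "summable (\<lambda>n. f' n (v/2))" unfolding f'_def using assms by (intro gp_bounds(1)) auto
  qed
  have c4: "v \<in> SS" using assms by (simp add: SS_def)
  have c6: "v \<in> interior SS" using assms by (simp add: SS_def)
  have c5: "summable (\<lambda>n. f n v)" unfolding f_def using assms by (intro gp_bounds(1))
  have "((\<lambda>x. \<Sum>n. f n x) has_field_derivative (\<Sum>n. f' n v)) (at v)"
    by (rule has_field_derivative_series'(2)[OF c1 c2 c3 c4 c5 c6])
  moreover have "(\<lambda>x. \<Sum>n. f n x) = gp q" by (simp add: f_def gp_def fun_eq_iff)
  moreover have "(\<Sum>n. f' n v) = gp (Suc q) v" by (simp add: f'_def gp_def)
  ultimately show ?thesis by simp
qed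



definition Gm :: "nat \<Rightarrow> real \<Rightarrow> real" where
  "Gm m u = (\<Sum>n. real (Suc n)^m / real (Suc n) * gp (Suc m) (u * real (Suc n)))"

lemma Gm_term_bound:
  assumes "u \<le> b" "b < 0"
  shows "\<bar>real (Suc n)^m / real (Suc n) * gp Q (u * real (Suc n))\<bar>
          \<le> fact Q / (1 - exp b)^(Q+1) * (real (Suc n)^m * exp b ^ Suc n)"
proof -
  have "u * real (Suc n) < 0" using assms by (simp add: mult_neg_pos)
  then have g0: "0 \<le> gp Q (u * real (Suc n))" by (rule gp_nonneg)
  have d: "real (Suc n)^m / real (Suc n) \<le> real (Suc n)^m / 1"
    by (intro divide_left_mono) auto
  have "\<bar>real (Suc n)^m / real (Suc n) * gp Q (u * real (Suc n))\<bar>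
        = real (Suc n)^m / real (Suc n) * gp Q (u * real (Suc n))" using g0 by simp
  also have "\<dots> \<le> real (Suc n)^m * gp Q (u * real (Suc n))"
    using d g0 by (intro mult_right_mono) auto
  also have "\<dots> \<le> real (Suc n)^m * (fact Q / (1 - exp b)^(Q+1) * exp b ^ Suc n)"
    using gp_le_geom[OF assms, of "Suc n" Q] by (intro mult_left_mono) auto
  finally show ?thesis by (simp add: mult_ac)
qed

lemma bound_summable:
  assumes "b < 0"
  shows "summable (\<lambda>n. C * (real (Suc n)^m * exp b ^ Suc n))"
  using assms by (intro summable_mult gp_bounds(1))

lemma Gm_summable:
  assumes "u < 0"
  shows "summable (\<lambda>n. real (Suc n)^m / real (Suc n) * gp Q (u * real (Suc n)))"
  by (rule summable_comparison_test'[OF bound_summable[OF assms, of "fact Q / (1 - exp u)^(Q+1)" m]])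
     (simp only: real_norm_def Gm_term_bound[OF order.refl assms])

lemma Gm_deriv:
  assumes "u < 0"
  shows "(Gm m has_field_derivative Gm (Suc m) u) (at u)"
proof -
  define SS where "SS = atLeastAtMost (u * 2) (u / 2)"
  define f where "f n w = real (Suc n)^m / real (Suc n) * gp (Suc m) (w * real (Suc n))" for n w
  define f' where "f' n w = real (Suc n)^Suc m / real (Suc n) * gp (Suc (Suc m)) (w * real (Suc n))" for n w
  have SSneg: "x \<in> SS \<Longrightarrow> x \<le> u / 2" for x by (simp add: SS_def)
  have c1: "convex SS" by (simp add: SS_def)
  have c2: "(f n has_field_derivative f' n x) (at x within SS)" if "x \<in> SS" for n x
  proof -
    have x0: "x * real (Suc n) < 0" using SSneg[OF that] assms by (simp add: mult_neg_pos)
    have "((\<lambda>w. w * real (Suc n)) has_field_derivative real (Suc n)) (at x)"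
      using DERIV_cmult_right[OF DERIV_ident, where c="real (Suc n)" and x=x and s=UNIV] by simp
    then have "((\<lambda>w. gp (Suc m) (w * real (Suc n))) has_field_derivative
            gp (Suc (Suc m)) (x * real (Suc n)) * real (Suc n)) (at x)"
      by (rule DERIV_chain2[where f="gp (Suc m)" and g="\<lambda>w. w * real (Suc n)" and x=x, OF gp_deriv[OF x0]])
    then have "(f n has_field_derivative real (Suc n)^m / real (Suc n) *
                (gp (Suc (Suc m)) (x * real (Suc n)) * real (Suc n))) (at x)"
      unfolding f_def by (rule DERIV_cmult)
    then have "(f n has_field_derivative f' n x) (at x)"
      by (rule DERIV_cong) (simp add: f'_def)
    then show ?thesis by (rule has_field_derivative_at_within)
  qed
  have c3: "uniformly_convergent_on SS (\<lambda>n x. \<Sum>i<n. f' i x)"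
  proof (rule Weierstrass_m_test')
    show "norm (f' n x) \<le> fact (Suc (Suc m)) / (1 - exp (u/2))^(Suc (Suc m)+1) *
             (real (Suc n)^Suc m * exp (u/2) ^ Suc n)" if "x \<in> SS" for n x
      unfolding f'_def real_norm_def
      by (rule Gm_term_bound) (use SSneg[OF that] assms in auto)
    show "summable (\<lambda>n. fact (Suc (Suc m)) / (1 - exp (u/2))^(Suc (Suc m)+1) *
             (real (Suc n)^Suc m * exp (u/2) ^ Suc n))"
      by (rule bound_summable) (use assms in auto)
  qed
  have c4: "u \<in> SS" using assms by (simp add: SS_def)
  have c6: "u \<in> interior SS" using assms by (simp add: SS_def)
  have c5: "summable (\<lambda>n. f n u)" unfolding f_def using assms by (rule Gm_summable)
  have "((\<lambda>x. \<Sum>n. f n x) has_field_derivative (\<Sum>n. f' n u)) (at u)"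
    by (rule has_field_derivative_series'(2)[OF c1 c2 c3 c4 c5 c6])
  moreover have "(\<lambda>x. \<Sum>n. f n x) = Gm m" by (simp add: f_def Gm_def fun_eq_iff)
  moreover have "(\<Sum>n. f' n u) = Gm (Suc m) u" by (simp add: f'_def Gm_def)
  ultimately show ?thesis by simp
qed

lemma F_eq_Gm0:
  assumes u: "u < 0"
  shows "macmahon_fulcrum u = Gm 0 u"
proof -
  define x where "x = exp u"
  have x0: "0 < x" and x1: "x < 1" using u by (auto simp: x_def)
  define a where "a l n = real (Suc n) * (x ^ Suc n) ^ l / real l" for l n
  define g where "g l = gp 1 (u * real l) / real l" for l
  define h where "h n = - (real (Suc n) * ln (1 - x ^ Suc n))" for n
  have a0: "a l n \<ge> 0" for l n using x0 by (simp add: a_def)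
  have hl: "((\<lambda>n. a l n) has_sum g l) UNIV" for l
  proof (cases l)
    case 0
    then show ?thesis by (simp add: a_def g_def)
  next
    case (Suc l')
    have ul: "u * real l < 0" using u Suc by (simp add: mult_neg_pos)
    have "(\<lambda>n. real (Suc n)^1 * exp (u * real l) ^ Suc n) sums gp 1 (u * real l)"
      unfolding gp_def using gp_bounds(1)[OF ul, of 1] by (rule summable_sums)
    then have "(\<lambda>n. real (Suc n)^1 * exp (u * real l) ^ Suc n / real l) sums g l"
      unfolding g_def by (rule sums_divide)
    moreover have "real (Suc n)^1 * exp (u * real l) ^ Suc n / real l = a l n" for n
    proof -
      have "exp (u * real l) ^ Suc n = exp (real (Suc n) * (u * real l))"
        by (rule exp_of_nat_mult[symmetric])
      also have "\<dots> = exp (real l * (real (Suc n) * u))" by (simp only: mult_ac)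
      also have "\<dots> = exp (real (Suc n) * u) ^ l" by (rule exp_of_nat_mult)
      also have "exp (real (Suc n) * u) = x ^ Suc n" by (simp only: x_def exp_of_nat_mult)
      finally have "exp (u * real l) ^ Suc n = (x ^ Suc n) ^ l" .
      then show ?thesis by (simp add: a_def)
    qed
    ultimately have "(\<lambda>n. a l n) sums g l" by simp
    then show ?thesis by (rule sums_nonneg_imp_has_sum) (rule a0)
  qed
  have g0: "g l \<ge> 0" for l
    using has_sum_nonneg[OF hl[of l]] a0 by auto
  have sumGm: "summable (\<lambda>n. g (Suc n))"
    using Gm_summable[OF u, of 0 1] by (simp add: g_def)
  then have sg: "summable g" by (simp add: summable_Suc_iff)
  have gsum: "g summable_on UNIV"
    by (rule summable_nonneg_imp_summable_on[OF sg g0])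
  have inner2: "(\<lambda>l. a l n) sums h n" for n
  proof -
    have "x ^ Suc n < 1" by (rule power_Suc_less_one[OF x0 x1])
    then have y: "\<bar>- (x ^ Suc n)\<bar> < 1" using x0 by simp
    have "(\<lambda>l. - ((- (- (x ^ Suc n)))^l) / of_nat l) sums ln (1 + - (x ^ Suc n))"
      by (rule ln_series'[OF y])
    then have "(\<lambda>l. - (- ((x ^ Suc n)^l) / of_nat l)) sums (- ln (1 - x ^ Suc n))"
      by (intro sums_minus) simp
    then have "(\<lambda>l. real (Suc n) * (- (- ((x ^ Suc n)^l) / of_nat l))) sums
                 (real (Suc n) * (- ln (1 - x ^ Suc n)))"
      by (rule sums_mult)
    moreover have "(\<lambda>l. real (Suc n) * (- (- ((x ^ Suc n)^l) / of_nat l))) = (\<lambda>l. a l n)"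
      by (simp add: a_def fun_eq_iff)
    moreover have "real (Suc n) * (- ln (1 - x ^ Suc n)) = h n" by (simp add: h_def)
    ultimately show ?thesis by simp
  qed
  have S: "(\<lambda>(l, n). a l n) summable_on UNIV \<times> UNIV"
    by (rule summable_on_SigmaI[where g=g]) (use hl gsum a0 in auto)
  have swap: "infsum (\<lambda>l. infsum (\<lambda>n. a l n) UNIV) UNIV = infsum (\<lambda>n. infsum (\<lambda>l. a l n) UNIV) UNIV"
    by (rule infsum_swap_banach[OF S])
  have e1: "infsum (\<lambda>n. a l n) UNIV = g l" for l by (rule infsumI[OF hl])
  have e2: "infsum (\<lambda>l. a l n) UNIV = h n" for n
    by (rule infsumI, rule sums_nonneg_imp_has_sum[OF inner2 a0])
  have S': "(\<lambda>(n, l). a l n) summable_on UNIV \<times> UNIV"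
    using S summable_on_swap[of "\<lambda>(l, n). a l n" UNIV UNIV] by simp
  have "(\<lambda>n. infsum (\<lambda>l. a l n) UNIV) summable_on UNIV"
  proof -
    have inn: "(\<lambda>l. a l n) summable_on UNIV" for n
      using sums_nonneg_imp_has_sum[OF inner2 a0] by (auto simp: summable_on_def)
    show ?thesis
      using summable_on_SigmaD[of "\<lambda>(n, l). a l n" UNIV "\<lambda>_. UNIV"] S' inn by simp
  qed
  then have hsum: "h summable_on UNIV" by (simp add: e2)
  have "infsum h UNIV = suminf h"
    using has_sum_imp_sums[OF has_sum_infsum[OF hsum]] by (simp add: sums_iff)
  moreover have "infsum g UNIV = suminf g"
    using gsum has_sum_imp_sums[OF has_sum_infsum[OF gsum]] by (simp add: sums_iff)
  moreover have "infsum g UNIV = infsum h UNIV" using swap by (simp add: e1 e2)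
  moreover have "suminf g = (\<Sum>n. g (Suc n))"
    using suminf_split_head[OF sg] by (simp add: g_def)
  moreover have "Gm 0 u = (\<Sum>n. g (Suc n))"
    by (simp add: Gm_def g_def)
  moreover have "macmahon_fulcrum u = suminf h"
  proof -
    have "summable h" using summable_on_imp_summable[OF hsum] .
    then have "(\<Sum>n. - h n) = - suminf h" by (rule suminf_minus)
    moreover have "(\<lambda>n. - h n) = (\<lambda>j. real (Suc j) * ln (1 - exp (u * real (Suc j))))"
    proof -
      have xe: "x ^ Suc j = exp (u * real (Suc j))" for j
        unfolding x_def by (subst exp_of_nat_mult[symmetric]) (simp only: mult.commute)
      show ?thesis by (simp only: h_def xe minus_minus)
    qed
    ultimately show ?thesis unfolding macmahon_fulcrum_def by simp
  qed
  ultimately show ?thesis by simp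
qed

lemma higher_derivs:
  "u < 0 \<Longrightarrow> (deriv ^^ m) macmahon_fulcrum u = Gm m u"
proof (induction m arbitrary: u)
  case 0
  then show ?case by (simp add: F_eq_Gm0)
next
  case (Suc m)
  have "eventually (\<lambda>x. x \<in> {..<0::real}) (nhds u)"
    using Suc.prems by (intro eventually_nhds_in_open) auto
  then have ev: "eventually (\<lambda>x. (deriv ^^ m) macmahon_fulcrum x = Gm m x) (nhds u)"
    by eventually_elim (use Suc.IH in auto)
  have "(deriv ^^ Suc m) macmahon_fulcrum u = deriv ((deriv ^^ m) macmahon_fulcrum) u" by simp
  also have "\<dots> = deriv (Gm m) u" by (rule deriv_cong_ev[OF ev refl])
  also have "\<dots> = Gm (Suc m) u" by (rule DERIV_imp_deriv[OF Gm_deriv[OF Suc.prems]])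
  finally show ?case .
qed



lemma exp_bound:
  assumes "t \<ge> 0" "n \<ge> 1"
  shows "exp (-t) * (1 + t)^n \<le> real n ^ n"
proof -
  have n0: "real n > 0" using assms by simp
  have "1 + t / real n \<le> exp (t / real n)" by (rule exp_ge_add_one_self)
  then have "real n * (1 + t / real n) \<le> real n * exp (t / real n)"
    using n0 by (intro mult_left_mono) auto
  moreover have "real n * (1 + t / real n) = real n + t" using n0 by (simp add: field_simps)
  ultimately have "1 + t \<le> real n * exp (t / real n)" using assms by simp
  then have "(1 + t)^n \<le> (real n * exp (t / real n))^n"
    by (rule power_mono) (use assms in simp)
  also have "\<dots> = real n ^ n * exp t"
  proof -
    have "exp (t / real n) ^ n = exp (real n * (t / real n))" by (rule exp_of_nat_mult[symmetric])
    also have "real n * (t / real n) = t" using n0 by simp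
    finally show ?thesis by (simp add: power_mult_distrib)
  qed
  finally have "(1 + t)^n \<le> real n ^ n * exp t" .
  then have "exp (-t) * (1 + t)^n \<le> exp (-t) * (real n ^ n * exp t)"
    by (rule mult_left_mono) simp
  also have "\<dots> = real n ^ n" by (simp add: exp_minus field_simps)
  finally show ?thesis .
qed

lemma ratio_bound:
  fixes t :: real
  assumes "t > 0"
  shows "t / (1 - exp (-t)) \<le> 1 + t"
proof -
  have e1: "exp (-t) < 1" using assms exp_less_one_iff[of "-t"] by linarith
  have "(1 + t) * exp (-t) \<le> exp t * exp (-t)"
    by (rule mult_right_mono) auto
  also have "\<dots> = 1" by (simp add: exp_minus)
  finally have "(1 + t) * exp (-t) \<le> 1" .
  then have "t \<le> (1 + t) * (1 - exp (-t))" by (simp add: algebra_simps)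
  then show ?thesis using e1 by (simp add: pos_divide_le_eq)
qed

lemma psi_upper:
  assumes "t > 0"
  shows "t^(p+1) * gp p (-t) \<le> fact p * exp (-t) * (t / (1 - exp (-t)))^(p+1)"
proof -
  have "-t < 0" using assms by simp
  from gp_bounds(2)[OF this, of p]
  have "gp p (-t) \<le> fact p * exp (-t) / (1 - exp (-t))^(p+1)" .
  then have "t^(p+1) * gp p (-t) \<le> t^(p+1) * (fact p * exp (-t) / (1 - exp (-t))^(p+1))"
    using assms by (intro mult_left_mono) auto
  also have "\<dots> = fact p * exp (-t) * (t / (1 - exp (-t)))^(p+1)"
    by (simp add: power_divide)
  finally show ?thesis .
qed

lemma psi_lower:
  assumes "t > 0"
  shows "fact p * (t * exp (-t) / (1 - exp (-t)))^(p+1) \<le> t^(p+1) * gp p (-t)"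
proof -
  have "-t < 0" using assms by simp
  from gp_bounds(3)[OF this, of p]
  have "fact p * exp (-t)^(p+1) / (1 - exp (-t))^(p+1) \<le> gp p (-t)" .
  then have "t^(p+1) * (fact p * exp (-t)^(p+1) / (1 - exp (-t))^(p+1)) \<le> t^(p+1) * gp p (-t)"
    using assms by (intro mult_left_mono) auto
  moreover have "t^(p+1) * (fact p * exp (-t)^(p+1) / (1 - exp (-t))^(p+1))
      = fact p * (t * exp (-t) / (1 - exp (-t)))^(p+1)"
    by (simp add: power_divide power_mult_distrib)
  ultimately show ?thesis by simp
qed

lemma psi_bound:
  assumes "t > 0"
  shows "\<bar>t^(p+1) * gp p (-t)\<bar> \<le> fact p * real (p+1)^(p+1)"
proof -
  have "-t < 0" using assms by simp
  then have g0: "0 \<le> gp p (-t)" by (rule gp_nonneg)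
  have r0: "0 \<le> t / (1 - exp (-t))" using assms by (simp add: divide_nonneg_pos)
  have "\<bar>t^(p+1) * gp p (-t)\<bar> = t^(p+1) * gp p (-t)" using g0 assms by simp
  also have "\<dots> \<le> fact p * exp (-t) * (t / (1 - exp (-t)))^(p+1)" by (rule psi_upper[OF assms])
  also have "\<dots> \<le> fact p * exp (-t) * (1 + t)^(p+1)"
    by (intro mult_left_mono power_mono ratio_bound[OF assms] r0) auto
  also have "\<dots> = fact p * (exp (-t) * (1 + t)^(p+1))" by simp
  also have "\<dots> \<le> fact p * real (p+1)^(p+1)"
    by (intro mult_left_mono exp_bound) (use assms in auto)
  finally show ?thesis .
qed

lemma psi_lim:
  "((\<lambda>t. t^(p+1) * gp p (-t)) \<longlongrightarrow> fact p) (at_right 0)"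
proof (rule tendsto_sandwich)
  show "eventually (\<lambda>t::real. fact p * (t * exp (-t) / (1 - exp (-t)))^(p+1) \<le> t^(p+1) * gp p (-t)) (at_right 0)"
    using eventually_at_right_less[of "0::real"] by eventually_elim (rule psi_lower)
  show "eventually (\<lambda>t. t^(p+1) * gp p (-t) \<le> fact p * exp (-t) * (t / (1 - exp (-t)))^(p+1)) (at_right 0)"
    using eventually_at_right_less[of "0::real"] by eventually_elim (rule psi_upper)
  have l1: "((\<lambda>t::real. t / (1 - exp (-t))) \<longlongrightarrow> 1) (at_right 0)" by real_asymp
  have l3: "((\<lambda>t::real. exp (-t)) \<longlongrightarrow> 1) (at_right 0)" by real_asymp
  have "((\<lambda>t::real. exp (-t) * (t / (1 - exp (-t)))) \<longlongrightarrow> 1 * 1) (at_right 0)"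
    by (rule tendsto_mult[OF l3 l1])
  then have l2: "((\<lambda>t::real. t * exp (-t) / (1 - exp (-t))) \<longlongrightarrow> 1) (at_right 0)"
  proof -
    have eq: "(\<lambda>t::real. exp (-t) * (t / (1 - exp (-t)))) = (\<lambda>t. t * exp (-t) / (1 - exp (-t)))"
      by (simp add: fun_eq_iff mult_ac)
    have "((\<lambda>t::real. exp (-t) * (t / (1 - exp (-t)))) \<longlongrightarrow> 1) (at_right 0)"
      using \<open>((\<lambda>t::real. exp (-t) * (t / (1 - exp (-t)))) \<longlongrightarrow> 1 * 1) (at_right 0)\<close>
      by (simp only: mult.left_neutral)
    then show ?thesis unfolding eq .
  qed
  have "((\<lambda>t::real. fact p * (t * exp (-t) / (1 - exp (-t)))^(p+1)) \<longlongrightarrow> fact p * 1^(p+1)) (at_right 0)"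
    by (intro tendsto_mult tendsto_const tendsto_power l2)
  then show "((\<lambda>t::real. fact p * (t * exp (-t) / (1 - exp (-t)))^(p+1)) \<longlongrightarrow> fact p) (at_right 0)" by simp
  have "((\<lambda>t::real. fact p * exp (-t) * (t / (1 - exp (-t)))^(p+1)) \<longlongrightarrow> fact p * 1 * 1^(p+1)) (at_right 0)"
    by (intro tendsto_mult tendsto_const tendsto_power l1 l3)
  then show "((\<lambda>t::real. fact p * exp (-t) * (t / (1 - exp (-t)))^(p+1)) \<longlongrightarrow> fact p) (at_right 0)" by simp
qed


lemma term_eq:
  fixes s :: real assumes "s > 0"
  shows "s^(m+2) * (real (Suc k)^m / real (Suc k) * gp (Suc m) (- s * real (Suc k)))
       = (s * real (Suc k))^(Suc m + 1) * gp (Suc m) (-(s * real (Suc k))) / real (Suc k)^3"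
proof -
  define K where "K = real (Suc k)"
  have K0: "K > 0" by (simp add: K_def)
  have "(s * K)^(Suc m + 1) = s^(m+2) * (K^m * K^2)"
    by (simp add: power_mult_distrib power_add[symmetric])
  moreover have "K^m / K = K^m * K^2 / K^3" using K0 by (simp add: field_simps power_add[symmetric] eval_nat_numeral)
  ultimately have h: "(s * K)^(Suc m + 1) = s^(m+2) * (K^m * K^2)" "K^m / K = K^m * K^2 / K^3" by blast+
  define G where "G = gp (Suc m) (-(s * K))"
  have "s^(m+2) * (K^m / K * G) = s^(m+2) * (K^m * K^2 / K^3 * G)" by (simp only: h(2))
  also have "\<dots> = (s^(m+2) * (K^m * K^2)) * G / K^3" by (simp add: mult_ac)
  also have "\<dots> = (s * K)^(Suc m + 1) * G / K^3" by (simp only: h(1))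
  finally show ?thesis unfolding K_def[symmetric] G_def by simp
qed

theorem proposition4p3:
  fixes m :: nat
  shows "(\<lambda>s. (deriv ^^ m) macmahon_fulcrum (- s))
           \<sim>[at_right 0] (\<lambda>s. zeta3 * Gamma (real m + 2) / s ^ (m + 2))"
proof -
  define c where "c = (fact (Suc m) :: real)"
  define a where "a k s = (s * real (Suc k))^(Suc m + 1) * gp (Suc m) (-(s * real (Suc k))) / real (Suc k)^3" for k s
  define M where "M k = fact (Suc m) * real (Suc m + 1)^(Suc m + 1) * (1 / real (Suc k)^3)" for k
  have z: "summable (\<lambda>k. 1 / real (Suc k)^3)"
  proof -
    have "summable (\<lambda>n. inverse (real n ^ 3))" by (rule inverse_power_summable) simp
    then have "summable (\<lambda>n. inverse (real (Suc n) ^ 3))" by (subst summable_Suc_iff)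
    then show ?thesis by (simp add: inverse_eq_divide)
  qed
  have zpos: "zeta3 > 0" unfolding zeta3_def by (rule suminf_pos[OF z]) simp
  have c0: "c > 0" by (simp add: c_def)
  have lim_k: "((\<lambda>s. a k s) \<longlongrightarrow> c / real (Suc k)^3) (at_right 0)" for k
  proof -
    have "((\<lambda>s::real. s * real (Suc k)) \<longlongrightarrow> 0 * real (Suc k)) (at_right 0)"
      by (intro tendsto_mult tendsto_ident_at tendsto_const)
    then have t0: "((\<lambda>s::real. s * real (Suc k)) \<longlongrightarrow> 0) (at_right 0)" by simp
    have "eventually (\<lambda>s::real. s * real (Suc k) > 0) (at_right 0)"
      using eventually_at_right_less[of "0::real"] by eventually_elim simp
    then have F: "filterlim (\<lambda>s::real. s * real (Suc k)) (at_right 0) (at_right 0)"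
      by (rule tendsto_imp_filterlim_at_right[OF t0])
    have "((\<lambda>s. (s * real (Suc k))^(Suc m + 1) * gp (Suc m) (-(s * real (Suc k)))) \<longlongrightarrow> c) (at_right 0)"
      unfolding c_def by (rule filterlim_compose[OF psi_lim[of "Suc m"] F])
    then have "((\<lambda>s. (s * real (Suc k))^(Suc m + 1) * gp (Suc m) (-(s * real (Suc k))) / real (Suc k)^3)
                \<longlongrightarrow> c / real (Suc k)^3) (at_right 0)"
      by (rule tendsto_divide) auto
    then show ?thesis by (simp add: a_def)
  qed
  have bound: "eventually (\<lambda>(k,s). norm (a k s) \<le> M k) (at_top \<times>\<^sub>F at_right (0::real))"
    unfolding eventually_prod_filter
  proof (intro exI conjI allI impI)
    show "eventually (\<lambda>_. True) at_top" by simp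
    show "eventually (\<lambda>s::real. s > 0) (at_right 0)" by (rule eventually_at_right_less)
    fix k :: nat and s :: real
    assume "s > 0"
    then have "s * real (Suc k) > 0" by simp
    from psi_bound[OF this, of "Suc m"]
    have "\<bar>(s * real (Suc k))^(Suc m + 1) * gp (Suc m) (-(s * real (Suc k)))\<bar>
            \<le> fact (Suc m) * real (Suc m + 1)^(Suc m + 1)" .
    then have "\<bar>(s * real (Suc k))^(Suc m + 1) * gp (Suc m) (-(s * real (Suc k)))\<bar> / real (Suc k)^3
            \<le> fact (Suc m) * real (Suc m + 1)^(Suc m + 1) / real (Suc k)^3"
      by (rule divide_right_mono) simp
    then show "case (k, s) of (k, s) \<Rightarrow> norm (a k s) \<le> M k"
      by (simp add: a_def M_def abs_divide)
  qed
  have sM: "summable M" unfolding M_def by (rule summable_mult[OF z])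
  have T: "((\<lambda>s. \<Sum>k. a k s) \<longlongrightarrow> (\<Sum>k. c / real (Suc k)^3)) (at_right 0)"
    using tannerys_theorem[OF lim_k bound sM] by simp
  have "(\<Sum>k. c / real (Suc k)^3) = (\<Sum>k. c * (1 / real (Suc k)^3))" by simp
  also have "\<dots> = c * zeta3" unfolding zeta3_def by (rule suminf_mult[OF z])
  finally have T2: "((\<lambda>s. (\<Sum>k. a k s) / (zeta3 * c)) \<longlongrightarrow> (c * zeta3) / (zeta3 * c)) (at_right 0)"
    using T by (intro tendsto_divide tendsto_const) (use zpos c0 in auto)
  have G: "Gamma (real m + 2) = c"
    using Gamma_fact[of "Suc m", where 'a=real] by (simp add: c_def add.commute)
  have ev: "eventually (\<lambda>s. (\<Sum>k. a k s) / (zeta3 * c) =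
             (deriv ^^ m) macmahon_fulcrum (- s) / (zeta3 * Gamma (real m + 2) / s ^ (m + 2))) (at_right 0)"
    using eventually_at_right_less[of "0::real"]
  proof eventually_elim
    case (elim s)
    have u: "- s < 0" using elim by simp
    have "(deriv ^^ m) macmahon_fulcrum (- s) = Gm m (- s)" by (rule higher_derivs[OF u])
    moreover have "s^(m+2) * Gm m (- s)
         = (\<Sum>k. s^(m+2) * (real (Suc k)^m / real (Suc k) * gp (Suc m) (- s * real (Suc k))))"
      unfolding Gm_def by (rule suminf_mult[OF Gm_summable[OF u, of m "Suc m"], symmetric])
    ultimately have "s^(m+2) * (deriv ^^ m) macmahon_fulcrum (- s)
         = (\<Sum>k. s^(m+2) * (real (Suc k)^m / real (Suc k) * gp (Suc m) (- s * real (Suc k))))"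
      by simp
    also have "\<dots> = (\<Sum>k. a k s)" unfolding a_def by (simp only: term_eq[OF elim])
    finally have "(\<Sum>k. a k s) = s^(m+2) * (deriv ^^ m) macmahon_fulcrum (- s)" by simp
    then show ?case using elim zpos c0 by (simp add: G field_simps)
  qed
  have "((\<lambda>s. (deriv ^^ m) macmahon_fulcrum (- s) / (zeta3 * Gamma (real m + 2) / s ^ (m + 2))) \<longlongrightarrow> 1) (at_right 0)"
    using T2 zpos c0 by (subst tendsto_cong[OF ev, symmetric]) simp
  then show ?thesis by (rule asymp_equivI')
qed

end
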